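(* Let $P$ be an affine property of finite sets of integers. For each positive integer $n$, let $S(n;P) \subseteq \{1,2,\dots,n\}$ be a subset of largest possible cardinality among the subsets of $\{1,\dots,n\}$ having property $P$, let $f(n;P) = |S(n;P)|$, let $C_P(n) = f(n;P)/n$, and let $A(n;P)$ be the number of three-term arithmetic progressions formed from elements of $S(n;P)$ where order counts and equal terms are allowed, i.e. the number of ordered triples $(a,b,c) \in S(n;P)^3$ with $a + c = 2b$. Then $$A(n;P) = \frac{C_P(n)^3}{2} n^2 + o(n^2) \quad \text{as } n \to \infty.$$
   Context: A property $P$ of finite sets of integers is called affine if (C1) for each fixed pair of integers $\alpha \neq 0$ and $\beta$, a set $\{a_n\}$ has $P$ if and only if $\{\alpha a_n + \beta\}$ has $P$; and (C2) if a set has $P$, then all of its subsets have $P$. *)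

theory Defs
  imports Complex_Main "HOL-Library.Landau_Symbols"
begin

definition affine_prop :: "(int set \<Rightarrow> bool) \<Rightarrow> bool" where
  "affine_prop P \<longleftrightarrow>
     (\<forall>A alpha beta. finite A \<and> alpha \<noteq> 0 \<longrightarrow> (P A \<longleftrightarrow> P ((\<lambda>a. alpha * a + beta) ` A))) \<and>
     (\<forall>A B. finite A \<and> P A \<and> B \<subseteq> A \<longrightarrow> P B)"

definition num_3AP :: "int set \<Rightarrow> nat" where
  "num_3AP S = card {(a, b, c). a \<in> S \<and> b \<in> S \<and> c \<in> S \<and> a + c = 2 * b}"

end

theory Submission
  imports Defs "HOL-Analysis.Analysis"
begin

definition ee :: "real \<Rightarrow> complex" where "ee x = cis (2 * pi * x)"

lemma ee_add: "ee x * ee y = ee (x + y)"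
  by (simp add: ee_def cis_mult distrib_left)

lemma norm_ee[simp]: "norm (ee x) = 1" by (simp add: ee_def)

lemma ee_int: "ee (of_int m) = 1"
  by (simp add: ee_def)

lemma cnj_ee: "cnj (ee x) = ee (- x)" by (simp add: ee_def cis_cnj)

lemma ee_pow: "ee x ^ n = ee (real n * x)" unfolding ee_def by (simp add: Complex.DeMoivre mult_ac)

lemma norm_ee_minus_1: "norm (ee x - 1) \<le> 2 * pi * \<bar>x\<bar>"
proof -
  have "norm (ee x - 1) = 2 * \<bar>sin (2 * pi * x / 2)\<bar>"
    using dist_exp_i_1[of "2*pi*x"] by (simp add: ee_def cis_conv_exp mult_ac)
  also have "\<dots> \<le> 2 * \<bar>2 * pi * x / 2\<bar>" using abs_sin_x_le_abs_x by simp
  also have "\<dots> = 2 * pi * \<bar>x\<bar>" by (simp add: abs_mult)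
  finally show ?thesis .
qed

lemma ee_eq_1_iff: "ee x = 1 \<longleftrightarrow> x \<in> \<int>"
proof
  assume "ee x = 1"
  then have "cos (2*pi*x) = 1" by (simp add: ee_def complex_eq_iff)
  then obtain m :: int where "2*pi*x = real_of_int m * 2 * pi" using cos_one_2pi_int by metis
  then have "x = m" by simp
  then show "x \<in> \<int>" by simp
next
  assume "x \<in> \<int>" then show "ee x = 1" by (auto elim: Ints_cases simp: ee_int)
qed

lemma orth:
  fixes k :: int and N :: nat
  assumes "N > 0"
  shows "(\<Sum>r<N. ee (real r * of_int k / real N)) = (if int N dvd k then of_nat N else 0)"
proof (cases "int N dvd k")
  case True
  then obtain m where k: "k = int N * m" by blast
  have "ee (real r * of_int k / real N) = 1" for r
  proof -
    have "real r * of_int k / real N = of_int (int r * m)" using assms by (simp add: k)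
    then have "real r * of_int k / real N \<in> \<int>" by simp
    then show ?thesis by (simp only: ee_eq_1_iff)
  qed
  then show ?thesis using True by simp
next
  case False
  define w where "w = ee (of_int k / real N)"
  have w1: "w \<noteq> 1"
  proof
    assume "w = 1"
    then have "of_int k / real N \<in> \<int>" by (simp add: w_def ee_eq_1_iff)
    then obtain m :: int where "of_int k / real N = of_int m" by (auto elim: Ints_cases)
    then have "of_int k = real N * of_int m" using assms by (simp add: field_simps)
    then have "k = int N * m" by (metis of_int_eq_iff of_int_mult of_int_of_nat_eq)
    then show False using False by auto
  qed
  have wN: "w ^ N = 1" using assms by (simp add: w_def ee_pow ee_int)
  have "(\<Sum>r<N. ee (real r * of_int k / real N)) = (\<Sum>r<N. w ^ r)"
    by (simp add: w_def ee_pow)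
  also have "\<dots> = 0" using w1 wN by (simp add: geometric_sum)
  finally show ?thesis using False by simp
qed


definition Fh :: "nat \<Rightarrow> (int \<Rightarrow> real) \<Rightarrow> real \<Rightarrow> complex" where
  "Fh n f \<theta> = (\<Sum>x\<in>{1..int n}. of_real (f x) * ee (\<theta> * of_int x))"

definition T3 :: "nat \<Rightarrow> (int \<Rightarrow> real) \<Rightarrow> (int \<Rightarrow> real) \<Rightarrow> (int \<Rightarrow> real) \<Rightarrow> real" where
  "T3 n f1 f2 f3 = (\<Sum>a\<in>{1..int n}. \<Sum>b\<in>{1..int n}. \<Sum>c\<in>{1..int n}.
      f1 a * f2 b * f3 c * (if a + c = 2 * b then 1 else 0))"

lemma dvd_small_int: fixes k :: int assumes "d dvd k" "\<bar>k\<bar> < d" shows "k = 0"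
  using dvd_imp_le_int[of k d] assms by force

lemma delta3:
  fixes a b c :: int
  assumes "a \<in> {1..int n}" "b \<in> {1..int n}" "c \<in> {1..int n}"
  shows "(\<Sum>r<2*n+1. ee (real r * of_int (a + c - 2*b) / real (2*n+1))) =
         (if a + c = 2 * b then of_nat (2*n+1) else 0)"
proof -
  have "int (2*n+1) dvd (a + c - 2*b) \<longleftrightarrow> a + c - 2*b = 0"
  proof
    assume "int (2*n+1) dvd (a + c - 2*b)"
    moreover have "\<bar>a + c - 2*b\<bar> < int (2*n+1)" using assms by auto
    ultimately show "a + c - 2*b = 0" by (rule dvd_small_int)
  qed auto
  then show ?thesis using orth[of "2*n+1" "a+c-2*b"] by auto
qed

lemma sum3_prod:
  fixes f g h :: "'a \<Rightarrow> 'b::comm_ring_1"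
  shows "sum f A * sum g B * sum h C = (\<Sum>a\<in>A. \<Sum>b\<in>B. \<Sum>c\<in>C. f a * g b * h c)"
proof -
  have "sum f A * sum g B * sum h C = (\<Sum>a\<in>A. \<Sum>b\<in>B. f a * g b) * sum h C"
    by (simp only: sum_product)
  also have "\<dots> = (\<Sum>a\<in>A. \<Sum>b\<in>B. f a * g b * sum h C)"
    by (simp only: sum_distrib_right)
  also have "\<dots> = (\<Sum>a\<in>A. \<Sum>b\<in>B. \<Sum>c\<in>C. f a * g b * h c)"
    by (simp only: sum_distrib_left)
  finally show ?thesis .
qed

lemma T3_fourier:
  fixes n :: nat
  defines "N \<equiv> 2*n+1"
  shows "of_real (T3 n f1 f2 f3) =
    (\<Sum>r<N. Fh n f1 (real r / real N) * Fh n f2 (-2 * real r / real N) * Fh n f3 (real r / real N)) / of_nat N"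
proof -
  let ?I = "{1..int n}"
  have "(\<Sum>r<N. Fh n f1 (real r / real N) * Fh n f2 (-2 * real r / real N) * Fh n f3 (real r / real N))
     = (\<Sum>r<N. \<Sum>a\<in>?I. \<Sum>b\<in>?I. \<Sum>c\<in>?I. of_real (f1 a * f2 b * f3 c) *
            ee (real r * of_int (a + c - 2*b) / real N))"
  proof (rule sum.cong[OF refl])
    fix r
    have e: "ee (real r / real N * of_int a) * ee (-2 * real r / real N * of_int b) * ee (real r / real N * of_int c)
       = ee (real r * of_int (a + c - 2*b) / real N)" for a b c
      unfolding ee_add by (rule arg_cong[where f=ee]) (simp add: add_divide_distrib diff_divide_distrib algebra_simps)
    have e2: "of_real (f1 a) * ee (real r / real N * of_int a) * (of_real (f2 b) * ee (-2 * real r / real N * of_int b))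
        * (of_real (f3 c) * ee (real r / real N * of_int c)) =
        of_real (f1 a * f2 b * f3 c) * ee (real r * of_int (a + c - 2*b) / real N)" for a b c
      by (subst e[symmetric]) (simp only: of_real_mult mult_ac)
    show "Fh n f1 (real r / real N) * Fh n f2 (-2 * real r / real N) * Fh n f3 (real r / real N) =
      (\<Sum>a\<in>?I. \<Sum>b\<in>?I. \<Sum>c\<in>?I. of_real (f1 a * f2 b * f3 c) * ee (real r * of_int (a + c - 2*b) / real N))"
      unfolding Fh_def sum3_prod e2 ..
  qed
  also have "\<dots> = (\<Sum>a\<in>?I. \<Sum>b\<in>?I. \<Sum>c\<in>?I. of_real (f1 a * f2 b * f3 c) *
            (\<Sum>r<N. ee (real r * of_int (a + c - 2*b) / real N)))"
    by (simp add: sum_distrib_left sum.swap[of _ "{..<N}"])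
  also have "\<dots> = (\<Sum>a\<in>?I. \<Sum>b\<in>?I. \<Sum>c\<in>?I. of_real (f1 a * f2 b * f3 c) *
            (if a + c = 2 * b then of_nat N else 0))"
    unfolding N_def by (intro sum.cong refl) (simp only: delta3)
  also have "\<dots> = of_nat N * of_real (T3 n f1 f2 f3)"
    unfolding T3_def by (simp add: sum_distrib_left mult_ac) (intro sum.cong refl, simp)
  finally have X: "(\<Sum>r<N. Fh n f1 (real r / real N) * Fh n f2 (-2 * real r / real N) * Fh n f3 (real r / real N))
     = of_nat N * of_real (T3 n f1 f2 f3)" .
  have "(of_nat N::complex) \<noteq> 0" unfolding N_def by (simp del: of_nat_Suc)
  then show ?thesis unfolding X by simp
qed


lemma parseval:
  fixes n :: nat and t :: int
  defines "N \<equiv> 2*n+1"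
  assumes hyp: "\<And>x y. x \<in> {1..int n} \<Longrightarrow> y \<in> {1..int n} \<Longrightarrow> int N dvd t*(x-y) \<Longrightarrow> x = y"
  shows "(\<Sum>r<N. (norm (Fh n f (of_int t * real r / real N)))^2) = real N * (\<Sum>x\<in>{1..int n}. (f x)^2)"
proof -
  let ?I = "{1..int n}"
  have N0: "N > 0" unfolding N_def by simp
  have "of_real (\<Sum>r<N. (norm (Fh n f (of_int t * real r / real N)))^2)
      = (\<Sum>r<N. \<Sum>x\<in>?I. \<Sum>y\<in>?I. of_real (f x * f y) * ee (real r * of_int (t*(x-y)) / real N))"
  proof -
    have "of_real ((norm (Fh n f (of_int t * real r / real N)))^2) =
       (\<Sum>x\<in>?I. \<Sum>y\<in>?I. of_real (f x * f y) * ee (real r * of_int (t*(x-y)) / real N))" for r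
    proof -
      have e: "ee (of_int t * real r / real N * of_int x) * ee (- (of_int t * real r / real N * of_int y))
           = ee (real r * of_int (t*(x-y)) / real N)" for x y
        unfolding ee_add by (rule arg_cong[where f=ee]) (simp add: diff_divide_distrib algebra_simps)
      have "of_real ((norm (Fh n f (of_int t * real r / real N)))^2) =
         Fh n f (of_int t * real r / real N) * cnj (Fh n f (of_int t * real r / real N))"
        by (rule complex_norm_square)
      also have "\<dots> = (\<Sum>x\<in>?I. \<Sum>y\<in>?I. (of_real (f x) * ee (of_int t * real r / real N * of_int x)) *
            (of_real (f y) * ee (- (of_int t * real r / real N * of_int y))))"
        unfolding Fh_def by (simp add: cnj_ee sum_product)
      also have "\<dots> = (\<Sum>x\<in>?I. \<Sum>y\<in>?I. of_real (f x * f y) * ee (real r * of_int (t*(x-y)) / real N))"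
        by (intro sum.cong refl) (subst e[symmetric], simp only: of_real_mult mult_ac)
      finally show ?thesis .
    qed
    then show ?thesis by (simp only: of_real_sum)
  qed
  also have "\<dots> = (\<Sum>x\<in>?I. \<Sum>y\<in>?I. of_real (f x * f y) * (\<Sum>r<N. ee (real r * of_int (t*(x-y)) / real N)))"
    by (simp add: sum_distrib_left sum.swap[of _ "{..<N}"])
  also have "\<dots> = (\<Sum>x\<in>?I. \<Sum>y\<in>?I. of_real (f x * f y) * (if y = x then of_nat N else 0))"
  proof (intro sum.cong refl)
    fix x y assume "x \<in> ?I" "y \<in> ?I"
    then have "int N dvd t*(x-y) \<longleftrightarrow> y = x" using hyp by auto
    then show "of_real (f x * f y) * (\<Sum>r<N. ee (real r * of_int (t*(x-y)) / real N)) =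
        of_real (f x * f y) * (if y = x then of_nat N else 0)"
      using orth[OF N0, of "t*(x-y)"] by simp
  qed
  also have "\<dots> = (\<Sum>x\<in>?I. of_real (f x * f x) * of_nat N)"
    by (intro sum.cong refl) (simp add: if_distrib cong: if_cong)
  also have "\<dots> = of_real (real N * (\<Sum>x\<in>?I. (f x)^2))"
    by (simp add: sum_distrib_left power2_eq_square mult_ac)
  finally show ?thesis by (simp only: of_real_eq_iff)
qed

lemma trip_bound:
  fixes A B C :: "nat \<Rightarrow> complex"
  assumes "M \<ge> 0" "\<And>r. r \<in> R \<Longrightarrow> norm (A r) \<le> M"
    "(\<Sum>r\<in>R. (norm (B r))^2) \<le> K" "(\<Sum>r\<in>R. (norm (C r))^2) \<le> K"
  shows "(\<Sum>r\<in>R. norm (A r) * norm (B r) * norm (C r)) \<le> M * K"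
proof -
  have "(\<Sum>r\<in>R. norm (A r) * norm (B r) * norm (C r)) \<le> (\<Sum>r\<in>R. M * (((norm (B r))^2 + (norm (C r))^2) / 2))"
  proof (rule sum_mono)
    fix r assume r: "r \<in> R"
    have "norm (B r) * norm (C r) \<le> ((norm (B r))^2 + (norm (C r))^2) / 2"
      using sum_squares_bound[of "norm (B r)" "norm (C r)"] by (simp add: field_simps power2_eq_square)
    then show "norm (A r) * norm (B r) * norm (C r) \<le> M * (((norm (B r))^2 + (norm (C r))^2) / 2)"
      using assms(2)[OF r] assms(1) by (simp add: mult.assoc) (rule mult_mono, auto)
  qed
  also have "\<dots> = M * ((\<Sum>r\<in>R. (norm (B r))^2) + (\<Sum>r\<in>R. (norm (C r))^2)) / 2"
    by (simp add: sum_distrib_left sum.distrib sum_divide_distrib[symmetric] field_simps)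
  also have "\<dots> \<le> M * (K + K) / 2"
    using assms by (intro divide_right_mono mult_left_mono add_mono) auto
  finally show ?thesis by simp
qed


lemma sumsq_le:
  assumes "\<And>x. \<bar>f x\<bar> \<le> 1"
  shows "(\<Sum>x\<in>{1..int n}. (f x)^2) \<le> real n"
proof -
  have "(\<Sum>x\<in>{1..int n}. (f x)^2) \<le> (\<Sum>x\<in>{1..int n}. 1)"
    by (rule sum_mono) (metis abs_le_square_iff abs_one assms one_power2)
  then show ?thesis by simp
qed

lemma parseval1:
  fixes n :: nat
  defines "N \<equiv> 2*n+1"
  assumes "\<And>x. \<bar>f x\<bar> \<le> 1"
  shows "(\<Sum>r<N. (norm (Fh n f (real r / real N)))^2) \<le> real N * real n"
proof -
  have "(\<Sum>r<N. (norm (Fh n f (of_int 1 * real r / real N)))^2) = real N * (\<Sum>x\<in>{1..int n}. (f x)^2)"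
    unfolding N_def
  proof (rule parseval)
    fix x y assume "x \<in> {1..int n}" "y \<in> {1..int n}" "int (2 * n + 1) dvd 1 * (x - y)"
    moreover have "\<bar>1 * (x - y)\<bar> < int (2*n+1)" using \<open>x \<in> _\<close> \<open>y \<in> _\<close> by auto
    ultimately show "x = y" using dvd_small_int by fastforce
  qed
  then show ?thesis using sumsq_le[of f n, OF assms(2)] by (simp add: N_def)
qed

lemma parseval2:
  fixes n :: nat
  defines "N \<equiv> 2*n+1"
  assumes "\<And>x. \<bar>f x\<bar> \<le> 1"
  shows "(\<Sum>r<N. (norm (Fh n f (-2 * real r / real N)))^2) \<le> real N * real n"
proof -
  have "(\<Sum>r<N. (norm (Fh n f (of_int (-2) * real r / real N)))^2) = real N * (\<Sum>x\<in>{1..int n}. (f x)^2)"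
    unfolding N_def
  proof (rule parseval)
    fix x y assume "x \<in> {1..int n}" "y \<in> {1..int n}" "int (2 * n + 1) dvd (-2) * (x - y)"
    moreover have "\<bar>(-2) * (x - y)\<bar> < int (2*n+1)" using \<open>x \<in> _\<close> \<open>y \<in> _\<close> by auto
    ultimately show "x = y" using dvd_small_int by fastforce
  qed
  then show ?thesis using sumsq_le[of f n, OF assms(2)] by (simp add: N_def)
qed

lemma T3_bound:
  assumes b1: "\<And>x. \<bar>f1 x\<bar> \<le> 1" and b2: "\<And>x. \<bar>f2 x\<bar> \<le> 1" and b3: "\<And>x. \<bar>f3 x\<bar> \<le> 1"
    and M: "M \<ge> 0"
    and F: "(\<forall>\<theta>. norm (Fh n f1 \<theta>) \<le> M) \<or> (\<forall>\<theta>. norm (Fh n f2 \<theta>) \<le> M) \<or> (\<forall>\<theta>. norm (Fh n f3 \<theta>) \<le> M)"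
  shows "\<bar>T3 n f1 f2 f3\<bar> \<le> M * real n"
proof -
  define N where "N = 2*n+1"
  have N0: "real N > 0" by (simp add: N_def)
  define A where "A r = Fh n f1 (real r / real N)" for r
  define B where "B r = Fh n f2 (-2 * real r / real N)" for r
  define C where "C r = Fh n f3 (real r / real N)" for r
  have pA: "(\<Sum>r<N. (norm (A r))^2) \<le> real N * real n" unfolding A_def N_def by (rule parseval1[OF b1])
  have pB: "(\<Sum>r<N. (norm (B r))^2) \<le> real N * real n" unfolding B_def N_def by (rule parseval2[OF b2])
  have pC: "(\<Sum>r<N. (norm (C r))^2) \<le> real N * real n" unfolding C_def N_def by (rule parseval1[OF b3])
  have "\<bar>T3 n f1 f2 f3\<bar> = norm (of_real (T3 n f1 f2 f3) :: complex)" by simp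
  also have "\<dots> = norm (\<Sum>r<N. A r * B r * C r) / real N"
    unfolding T3_fourier A_def B_def C_def N_def by (simp only: norm_divide norm_of_nat)
  also have "\<dots> \<le> (\<Sum>r<N. norm (A r) * norm (B r) * norm (C r)) / real N"
    by (intro divide_right_mono order.trans[OF norm_sum]) (auto simp: norm_mult)
  also have "(\<Sum>r<N. norm (A r) * norm (B r) * norm (C r)) \<le> M * (real N * real n)"
    using F
  proof (elim disjE)
    assume "\<forall>\<theta>. norm (Fh n f1 \<theta>) \<le> M"
    then show ?thesis using trip_bound[OF M _ pB pC, of A] by (simp add: A_def)
  next
    assume "\<forall>\<theta>. norm (Fh n f2 \<theta>) \<le> M"
    then have "(\<Sum>r<N. norm (B r) * norm (A r) * norm (C r)) \<le> M * (real N * real n)"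
      using trip_bound[OF M _ pA pC, of B] by (simp add: B_def)
    then show ?thesis by (simp add: mult_ac)
  next
    assume "\<forall>\<theta>. norm (Fh n f3 \<theta>) \<le> M"
    then have "(\<Sum>r<N. norm (C r) * norm (A r) * norm (B r)) \<le> M * (real N * real n)"
      using trip_bound[OF M _ pA pB, of C] by (simp add: C_def)
    then show ?thesis by (simp add: mult_ac)
  qed
  then have "(\<Sum>r<N. norm (A r) * norm (B r) * norm (C r)) / real N \<le> M * (real N * real n) / real N"
    using N0 by (intro divide_right_mono) auto
  also have "\<dots> = M * real n" using N0 by simp
  finally show ?thesis by simp
qed


lemma shift_sum:
  fixes k :: "int \<Rightarrow> 'a::comm_monoid_add" and n :: nat and s w :: int
  assumes k0: "\<And>x. x \<notin> {1..int n} \<Longrightarrow> k x = 0" and s: "0 \<le> s" "s \<le> w"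
  shows "(\<Sum>x0\<in>{1 - w..int n}. k (x0 + s)) = (\<Sum>x\<in>{1..int n}. k x)"
proof -
  have "(\<Sum>x0\<in>{1 - w..int n}. k (x0 + s)) = (\<Sum>x\<in>(\<lambda>x. x + s) ` {1 - w..int n}. k x)"
    by (subst sum.reindex) (auto simp: inj_on_def)
  also have "(\<lambda>x. x + s) ` {1 - w..int n} = {1 - w + s..int n + s}"
    by (simp add: image_add_atLeastAtMost' add.commute)
  also have "(\<Sum>x\<in>{1 - w + s..int n + s}. k x) = (\<Sum>x\<in>{1..int n}. k x)"
    by (rule sum.mono_neutral_right) (use s k0 in auto)
  finally show ?thesis .
qed

lemma avg_sum:
  fixes k :: "int \<Rightarrow> 'a::comm_semiring_1" and n L :: nat and q :: int
  assumes k0: "\<And>x. x \<notin> {1..int n} \<Longrightarrow> k x = 0" and q: "q \<ge> 1"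
  shows "(\<Sum>x0\<in>{1 - q * (int L - 1)..int n}. \<Sum>j<L. k (x0 + q * int j)) = of_nat L * (\<Sum>x\<in>{1..int n}. k x)"
proof -
  have "(\<Sum>x0\<in>{1 - q * (int L - 1)..int n}. \<Sum>j<L. k (x0 + q * int j))
     = (\<Sum>j<L. \<Sum>x0\<in>{1 - q * (int L - 1)..int n}. k (x0 + q * int j))"
    by (rule sum.swap)
  also have "\<dots> = (\<Sum>j<L. \<Sum>x\<in>{1..int n}. k x)"
  proof (rule sum.cong[OF refl])
    fix j assume "j \<in> {..<L}"
    then have "q * int j \<le> q * (int L - 1)" using q by (intro mult_left_mono) auto
    moreover have "0 \<le> q * int j" using q by simp
    ultimately show "(\<Sum>x0\<in>{1 - q * (int L - 1)..int n}. k (x0 + q * int j)) = (\<Sum>x\<in>{1..int n}. k x)"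
      by (intro shift_sum k0) auto
  qed
  also have "\<dots> = of_nat L * (\<Sum>x\<in>{1..int n}. k x)" by simp
  finally show ?thesis .
qed


lemma equidist:
  fixes g :: "int \<Rightarrow> real" and n L Q :: nat and \<epsilon> \<theta> :: real
  assumes gb: "\<And>x. \<bar>g x\<bar> \<le> 1" and g0: "\<And>x. x \<notin> {1..int n} \<Longrightarrow> g x = 0"
    and gs: "(\<Sum>x\<in>{1..int n}. g x) = 0" and L: "L \<ge> 1" and Q: "Q \<ge> 1" and \<epsilon>: "\<epsilon> \<ge> 0"
    and AP: "\<And>x0 q. 1 \<le> q \<Longrightarrow> q \<le> int Q \<Longrightarrow> 1 \<le> x0 \<Longrightarrow> x0 + q * (int L - 1) \<le> int n \<Longrightarrow>
               (\<Sum>j<L. g (x0 + q * int j)) \<le> \<epsilon> * real L"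
  shows "norm (Fh n g \<theta>) \<le> 2 * \<epsilon> * real n + 4 * real Q * real L + 2 * pi * real n * real L / real Q"
proof -
  obtain h q where q0: "0 < q" and qQ: "q \<le> int Q" and qh: "\<bar>of_int q * \<theta> - of_int h\<bar> < 1 / real Q"
  proof -
    have "Q > 0" using Q by simp
    from Dirichlet_approx[OF this, of \<theta>] show thesis using that by blast
  qed
  define \<phi> where "\<phi> = of_int q * \<theta> - of_int h"
  define hh where "hh x = of_real (g x) * ee (\<theta> * of_int x)" for x
  define R where "R = {1 - q * (int L - 1)..int n}"
  define F where "F = {1..int n - q * (int L - 1)}"
  define D where "D x0 = (\<Sum>j<L. hh (x0 + q * int j))" for x0
  define G where "G x0 = (\<Sum>j<L. g (x0 + q * int j))" for x0
  have hh0: "\<And>x. x \<notin> {1..int n} \<Longrightarrow> hh x = 0" using g0 by (simp add: hh_def)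
  have H: "Fh n g \<theta> = (\<Sum>x\<in>{1..int n}. hh x)" by (simp add: Fh_def hh_def)
  have sumD: "(\<Sum>x0\<in>R. D x0) = of_nat L * Fh n g \<theta>"
    unfolding R_def D_def H using avg_sum[where k=hh and n=n and q=q and L=L] hh0 q0 by simp
  have sumG: "(\<Sum>x0\<in>R. G x0) = 0"
    unfolding R_def G_def using avg_sum[where k=g and n=n and q=q and L=L] g0 q0 gs by simp
  have qL0: "0 \<le> q * (int L - 1)" using q0 L by simp
  have FR: "F \<subseteq> R" unfolding F_def R_def using qL0 by auto
  have cardRF: "real (card (R - F)) \<le> 2 * real Q * real L"
  proof -
    have "R - F \<subseteq> {1 - q * (int L - 1)..0} \<union> {int n - q * (int L - 1) + 1..int n}"
      unfolding R_def F_def by auto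
    then have "card (R - F) \<le> card ({1 - q * (int L - 1)..0} \<union> {int n - q * (int L - 1) + 1..int n})"
      by (intro card_mono) auto
    also have "\<dots> \<le> card {1 - q * (int L - 1)..0} + card {int n - q * (int L - 1) + 1..int n}"
      by (rule card_Un_le)
    also have "\<dots> = 2 * nat (q * (int L - 1))" by simp
    finally have "real (card (R - F)) \<le> 2 * real (nat (q * (int L - 1)))" by linarith
    also have "real (nat (q * (int L - 1))) = of_int (q * (int L - 1))" using qL0 by simp
    also have "of_int (q * (int L - 1)) \<le> real Q * real L"
    proof -
      have "q * (int L - 1) \<le> int Q * int L" using qQ q0 L by (intro mult_mono) auto
      then show ?thesis by (metis of_int_le_iff of_int_mult of_int_of_nat_eq)
    qed
    finally show ?thesis by simp
  qed
  have cardF: "real (card F) \<le> real n" unfolding F_def using qL0 by simp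
  have finR: "finite R" "finite F" unfolding R_def F_def by auto
  have Dle: "norm (D x0) \<le> real L" for x0
  proof -
    have "norm (D x0) \<le> (\<Sum>j<L. norm (hh (x0 + q * int j)))" unfolding D_def by (rule norm_sum)
    also have "\<dots> \<le> (\<Sum>j<L. 1)" by (intro sum_mono) (simp add: hh_def norm_mult gb)
    finally show ?thesis by simp
  qed
  have Gle: "\<bar>G x0\<bar> \<le> real L" for x0
  proof -
    have "\<bar>G x0\<bar> \<le> (\<Sum>j<L. \<bar>g (x0 + q * int j)\<bar>)" unfolding G_def by (rule sum_abs)
    also have "\<dots> \<le> (\<Sum>j<L. 1)" by (intro sum_mono) (simp add: gb)
    finally show ?thesis by simp
  qed
  have DG: "norm (D x0 - ee (\<theta> * of_int x0) * of_real (G x0)) \<le> real L * (2 * pi * real L / real Q)" for x0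
  proof -
    have "D x0 - ee (\<theta> * of_int x0) * of_real (G x0) =
        (\<Sum>j<L. of_real (g (x0 + q * int j)) * ee (\<theta> * of_int x0) * (ee (\<phi> * real j) - 1))"
    proof -
      have e: "ee (\<theta> * of_int (x0 + q * int j)) = ee (\<theta> * of_int x0) * ee (\<phi> * real j)" for j
      proof -
        have "ee (\<theta> * of_int x0) * ee (\<phi> * real j) = ee (\<theta> * of_int x0) * ee (\<phi> * real j) * ee (of_int (h * int j))"
          by (simp only: ee_int mult_1_right)
        also have "\<dots> = ee (\<theta> * of_int x0 + \<phi> * real j + of_int (h * int j))" by (simp add: ee_add)
        also have "\<theta> * of_int x0 + \<phi> * real j + of_int (h * int j) = \<theta> * of_int (x0 + q * int j)"
          by (simp add: \<phi>_def algebra_simps)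
        finally show ?thesis by simp
      qed
      show ?thesis unfolding D_def G_def hh_def e
        by (simp add: sum_distrib_left sum_subtractf[symmetric] algebra_simps)
    qed
    also have "norm \<dots> \<le> (\<Sum>j<L. norm (of_real (g (x0 + q * int j)) * ee (\<theta> * of_int x0) * (ee (\<phi> * real j) - 1)))"
      by (rule norm_sum)
    also have "\<dots> \<le> (\<Sum>j<L. 2 * pi * real L / real Q)"
    proof (rule sum_mono)
      fix j assume j: "j \<in> {..<L}"
      have "norm (ee (\<phi> * real j) - 1) \<le> 2 * pi * \<bar>\<phi> * real j\<bar>" by (rule norm_ee_minus_1)
      also have "\<bar>\<phi> * real j\<bar> \<le> (1 / real Q) * real L"
        unfolding abs_mult using qh j by (intro mult_mono) (auto simp: \<phi>_def)
      finally have "norm (ee (\<phi> * real j) - 1) \<le> 2 * pi * real L / real Q"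
        by (simp add: field_simps)
      moreover have "norm (of_real (g (x0 + q * int j)) :: complex) \<le> 1" using gb by simp
      ultimately show "norm (of_real (g (x0 + q * int j)) * ee (\<theta> * of_int x0) * (ee (\<phi> * real j) - 1))
          \<le> 2 * pi * real L / real Q"
        unfolding norm_mult by (simp add: mult_le_one order_trans[OF mult_left_le_one_le] 
            mult_le_cancel_right1)
    qed
    also have "\<dots> = real L * (2 * pi * real L / real Q)" by simp
    finally show ?thesis .
  qed
  have GF: "G x0 \<le> \<epsilon> * real L" if "x0 \<in> F" for x0
    unfolding G_def using that q0 qQ by (intro AP) (auto simp: F_def)
  have sumGF: "\<bar>\<Sum>x0\<in>F. G x0\<bar> \<le> 2 * real Q * real L * real L"
  proof -
    have "(\<Sum>x0\<in>R. G x0) = (\<Sum>x0\<in>R - F. G x0) + (\<Sum>x0\<in>F. G x0)"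
      using sum.subset_diff[OF FR finR(1)] by simp
    then have "\<bar>\<Sum>x0\<in>F. G x0\<bar> = \<bar>\<Sum>x0\<in>R - F. G x0\<bar>" using sumG by simp
    also have "\<dots> \<le> (\<Sum>x0\<in>R - F. \<bar>G x0\<bar>)" by (rule sum_abs)
    also have "\<dots> \<le> (\<Sum>x0\<in>R - F. real L)" by (intro sum_mono Gle)
    also have "\<dots> = real (card (R - F)) * real L" by simp
    also have "\<dots> \<le> 2 * real Q * real L * real L" using cardRF by (intro mult_right_mono) auto
    finally show ?thesis .
  qed
  have absGF: "(\<Sum>x0\<in>F. \<bar>G x0\<bar>) \<le> 2 * real n * \<epsilon> * real L + 2 * real Q * real L * real L"
  proof -
    have "(\<Sum>x0\<in>F. \<bar>G x0\<bar>) = (\<Sum>x0\<in>F. 2 * max (G x0) 0 - G x0)"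
      by (intro sum.cong refl) auto
    also have "\<dots> = 2 * (\<Sum>x0\<in>F. max (G x0) 0) - (\<Sum>x0\<in>F. G x0)"
      by (simp add: sum_subtractf sum_distrib_left)
    also have "(\<Sum>x0\<in>F. max (G x0) 0) \<le> (\<Sum>x0\<in>F. \<epsilon> * real L)"
      using GF \<epsilon> by (intro sum_mono) auto
    also have "\<dots> = real (card F) * (\<epsilon> * real L)" by simp
    also have "\<dots> \<le> real n * (\<epsilon> * real L)" using cardF \<epsilon> by (intro mult_right_mono) auto
    finally show ?thesis using sumGF by linarith
  qed
  have normDF: "norm (\<Sum>x0\<in>F. D x0) \<le> 2 * real n * \<epsilon> * real L + 2 * real Q * real L * real L
        + real n * (real L * (2 * pi * real L / real Q))"
  proof -
    have "norm (\<Sum>x0\<in>F. D x0) \<le> norm (\<Sum>x0\<in>F. ee (\<theta> * of_int x0) * of_real (G x0))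
         + norm (\<Sum>x0\<in>F. D x0 - ee (\<theta> * of_int x0) * of_real (G x0))"
    proof -
      have "(\<Sum>x0\<in>F. D x0) = (\<Sum>x0\<in>F. ee (\<theta> * of_int x0) * of_real (G x0))
         + (\<Sum>x0\<in>F. D x0 - ee (\<theta> * of_int x0) * of_real (G x0))"
        by (simp add: sum_subtractf)
      then show ?thesis by (simp only: norm_triangle_ineq)
    qed
    also have "norm (\<Sum>x0\<in>F. ee (\<theta> * of_int x0) * of_real (G x0)) \<le> (\<Sum>x0\<in>F. \<bar>G x0\<bar>)"
      by (rule order.trans[OF norm_sum]) (simp add: norm_mult)
    also have "norm (\<Sum>x0\<in>F. D x0 - ee (\<theta> * of_int x0) * of_real (G x0))
        \<le> (\<Sum>x0\<in>F. real L * (2 * pi * real L / real Q))"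
      by (rule order.trans[OF norm_sum]) (intro sum_mono DG)
    also have "\<dots> = real (card F) * (real L * (2 * pi * real L / real Q))" by simp
    also have "\<dots> \<le> real n * (real L * (2 * pi * real L / real Q))"
      using cardF by (intro mult_right_mono) auto
    finally show ?thesis using absGF by linarith
  qed
  have normDRF: "norm (\<Sum>x0\<in>R - F. D x0) \<le> 2 * real Q * real L * real L"
  proof -
    have "norm (\<Sum>x0\<in>R - F. D x0) \<le> (\<Sum>x0\<in>R - F. real L)"
      by (rule order.trans[OF norm_sum]) (intro sum_mono Dle)
    also have "\<dots> = real (card (R - F)) * real L" by simp
    also have "\<dots> \<le> 2 * real Q * real L * real L" using cardRF by (intro mult_right_mono) auto
    finally show ?thesis .
  qed
  have "real L * norm (Fh n g \<theta>) = norm (\<Sum>x0\<in>R. D x0)" using sumD by (simp add: norm_mult)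
  also have "(\<Sum>x0\<in>R. D x0) = (\<Sum>x0\<in>R - F. D x0) + (\<Sum>x0\<in>F. D x0)"
    using sum.subset_diff[OF FR finR(1)] by simp
  also have "norm \<dots> \<le> norm (\<Sum>x0\<in>R - F. D x0) + norm (\<Sum>x0\<in>F. D x0)" by (rule norm_triangle_ineq)
  finally have "real L * norm (Fh n g \<theta>) \<le> real L * (2 * \<epsilon> * real n + 4 * real Q * real L + 2 * pi * real n * real L / real Q)"
    using normDF normDRF by (simp add: algebra_simps)
  then show ?thesis using L by simp
qed


definition ind :: "int set \<Rightarrow> int \<Rightarrow> real" where "ind A x = (if x \<in> A then 1 else 0)"

lemma num_3AP_T3:
  assumes "S \<subseteq> {1..int n}"
  shows "real (num_3AP S) = T3 n (ind S) (ind S) (ind S)"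
proof -
  let ?I = "{1..int n}"
  define X where "X = {(a, b, c). a \<in> S \<and> b \<in> S \<and> c \<in> S \<and> a + c = 2 * b}"
  have XI: "X \<subseteq> ?I \<times> ?I \<times> ?I" using assms unfolding X_def by auto
  have "real (num_3AP S) = real (card X)" unfolding num_3AP_def X_def by simp
  also have "\<dots> = (\<Sum>p\<in>?I \<times> ?I \<times> ?I. if p \<in> X then 1 else 0)"
  proof -
    have "X = (?I \<times> ?I \<times> ?I) \<inter> X" using XI by auto
    then have "real (card X) = (\<Sum>p\<in>(?I \<times> ?I \<times> ?I) \<inter> X. 1)" by simp
    also have "\<dots> = (\<Sum>p\<in>?I \<times> ?I \<times> ?I. if p \<in> X then 1 else 0)"
      by (rule sum.inter_restrict) simp
    finally show ?thesis .
  qed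
  also have "\<dots> = (\<Sum>a\<in>?I. \<Sum>b\<in>?I. \<Sum>c\<in>?I. if (a, b, c) \<in> X then 1 else 0)"
    by (simp add: sum.cartesian_product case_prod_beta)
  also have "\<dots> = T3 n (ind S) (ind S) (ind S)"
    unfolding T3_def by (intro sum.cong refl) (auto simp: X_def ind_def)
  finally show ?thesis .
qed

definition sg :: "int \<Rightarrow> real" where "sg x = (if even x then 1 else -1)"

lemma sum_sg: "(\<Sum>x\<in>{1..int n}. sg x) = (if even n then 0 else -1)"
proof (induction n)
  case 0 then show ?case by simp
next
  case (Suc n)
  have "{1..int (Suc n)} = insert (int n + 1) {1..int n}" by auto
  then have "(\<Sum>x\<in>{1..int (Suc n)}. sg x) = sg (int n + 1) + (\<Sum>x\<in>{1..int n}. sg x)" by simp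
  then show ?case using Suc by (simp add: sg_def)
qed

lemma T3_const:
  "T3 n (\<lambda>x. d) (\<lambda>x. d) (\<lambda>x. d) = d^3 * (real n ^ 2 + (if even n then 0 else 1)) / 2"
proof -
  let ?I = "{1..int n}"
  have "T3 n (\<lambda>x. d) (\<lambda>x. d) (\<lambda>x. d) = d^3 * (\<Sum>a\<in>?I. \<Sum>b\<in>?I. \<Sum>c\<in>?I. if a + c = 2 * b then 1 else 0)"
    unfolding T3_def by (simp add: sum_distrib_left power3_eq_cube)
  also have "(\<Sum>a\<in>?I. \<Sum>b\<in>?I. \<Sum>c\<in>?I. if a + c = 2 * b then 1 else (0::real))
      = (\<Sum>a\<in>?I. \<Sum>c\<in>?I. \<Sum>b\<in>?I. if a + c = 2 * b then 1 else 0)"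
    by (rule sum.cong[OF refl], rule sum.swap)
  also have "\<dots> = (\<Sum>a\<in>?I. \<Sum>c\<in>?I. (1 + sg a * sg c) / 2)"
  proof (intro sum.cong refl)
    fix a c assume a: "a \<in> ?I" and c: "c \<in> ?I"
    have "(\<Sum>b\<in>?I. if a + c = 2 * b then 1 else (0::real)) =
          (\<Sum>b\<in>?I. if b = (a + c) div 2 then (if even (a + c) then 1 else 0) else 0)"
      by (intro sum.cong refl) (auto; presburger)
    also have "\<dots> = (if even (a + c) then 1 else 0)"
      using a c by (subst sum.delta) auto
    also have "\<dots> = (1 + sg a * sg c) / 2" by (auto simp: sg_def)
    finally show "(\<Sum>b\<in>?I. if a + c = 2 * b then 1 else (0::real)) = (1 + sg a * sg c) / 2" .
  qed
  also have "\<dots> = (real n ^ 2 + (\<Sum>a\<in>?I. sg a) ^ 2) / 2"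
    by (simp add: sum_divide_distrib[symmetric] sum.distrib power2_eq_square sum_product)
  also have "(\<Sum>a\<in>?I. sg a) ^ 2 = (if even n then 0 else 1)" by (simp add: sum_sg)
  finally show ?thesis by simp
qed

lemma T3_decomp:
  assumes "\<And>x. x \<in> {1..int n} \<Longrightarrow> f x = u x + g x"
  shows "T3 n f f f = T3 n u u u + T3 n g f f + T3 n u g f + T3 n u u g"
  unfolding T3_def
  by (simp only: sum.distrib[symmetric]) (intro sum.cong refl, simp add: assms algebra_simps)


lemma ap_count:
  fixes P :: "int set \<Rightarrow> bool" and Sn SL :: "int set" and q x0 :: int and L :: nat
  assumes aff: "affine_prop P" and PS: "P Sn" and Sn: "finite Sn"
    and SL: "\<And>T. T \<subseteq> {1..int L} \<Longrightarrow> P T \<Longrightarrow> card T \<le> card SL"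
    and q: "q \<ge> 1"
  shows "card {j\<in>{..<L}. x0 + q * int j \<in> Sn} \<le> card SL"
proof -
  define B where "B = {j \<in> {1..int L}. x0 + q * (j - 1) \<in> Sn}"
  have Bimg: "B = (\<lambda>j. int j + 1) ` {j\<in>{..<L}. x0 + q * int j \<in> Sn}"
  proof
    show "B \<subseteq> (\<lambda>j. int j + 1) ` {j\<in>{..<L}. x0 + q * int j \<in> Sn}"
    proof
      fix j assume "j \<in> B"
      then have j: "1 \<le> j" "j \<le> int L" "x0 + q * (j - 1) \<in> Sn" by (auto simp: B_def)
      then have "nat (j - 1) \<in> {j\<in>{..<L}. x0 + q * int j \<in> Sn}" by auto
      moreover have "j = int (nat (j - 1)) + 1" using j by simp
      ultimately show "j \<in> (\<lambda>j. int j + 1) ` {j\<in>{..<L}. x0 + q * int j \<in> Sn}" by blast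
    qed
  qed (auto simp: B_def)
  have cardB: "card B = card {j\<in>{..<L}. x0 + q * int j \<in> Sn}"
    unfolding Bimg by (rule card_image) (auto simp: inj_on_def)
  have finB: "finite B" unfolding B_def by (rule finite_subset[of _ "{1..int L}"]) auto
  have img: "(\<lambda>j. q * j + (x0 - q)) ` B \<subseteq> Sn"
    by (auto simp: B_def algebra_simps)
  have "P ((\<lambda>j. q * j + (x0 - q)) ` B)"
    using aff PS Sn img unfolding affine_prop_def by blast
  moreover have "q \<noteq> 0" using q by simp
  ultimately have "P B" using aff finB unfolding affine_prop_def by blast
  moreover have "B \<subseteq> {1..int L}" by (auto simp: B_def)
  ultimately have "card B \<le> card SL" using SL by blast
  then show ?thesis using cardB by simp
qed


lemma sum_ind: "finite A \<Longrightarrow> (\<Sum>x\<in>A. if P x then 1 else (0::real)) = real (card {x\<in>A. P x})"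
  by (simp add: sum.If_cases Int_def)

lemma core:
  fixes P :: "int set \<Rightarrow> bool" and Sn SL :: "int set" and n L Q :: nat and \<epsilon> c :: real
  assumes aff: "affine_prop P" and Sn: "Sn \<subseteq> {1..int n}" and PS: "P Sn" and n: "n \<ge> 1"
    and SL: "\<And>T. T \<subseteq> {1..int L} \<Longrightarrow> P T \<Longrightarrow> card T \<le> card SL"
    and cSL: "real (card SL) \<le> (c + \<epsilon>) * real L" and c: "c \<le> real (card Sn) / real n"
    and L: "L \<ge> 1" and Q: "Q \<ge> 1" and \<epsilon>: "\<epsilon> \<ge> 0"
  shows "\<bar>real (num_3AP Sn) - (real (card Sn) / real n) ^ 3 / 2 * real n ^ 2\<bar>
     \<le> 3 * (2 * \<epsilon> * real n + 4 * real Q * real L + 2 * pi * real n * real L / real Q) * real n + 1/2"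
proof -
  let ?I = "{1..int n}"
  define \<delta> where "\<delta> = real (card Sn) / real n"
  have finSn: "finite Sn" using Sn finite_subset by blast
  have cardSn: "card Sn \<le> n" using card_mono[OF _ Sn] by simp
  have \<delta>0: "0 \<le> \<delta>" and \<delta>1: "\<delta> \<le> 1" using cardSn n by (auto simp: \<delta>_def)
  define f where "f = ind Sn"
  define u where "u = (\<lambda>x::int. \<delta>)"
  define g where "g x = (if x \<in> ?I then ind Sn x - \<delta> else 0)" for x
  define M where "M = 2 * \<epsilon> * real n + 4 * real Q * real L + 2 * pi * real n * real L / real Q"
  have M0: "M \<ge> 0" unfolding M_def using \<epsilon> by simp
  have fb: "\<bar>f x\<bar> \<le> 1" for x by (simp add: f_def ind_def)
  have ub: "\<bar>u x\<bar> \<le> 1" for x using \<delta>0 \<delta>1 by (simp add: u_def)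
  have gb: "\<bar>g x\<bar> \<le> 1" for x using \<delta>0 \<delta>1 by (simp add: g_def ind_def)
  have sumind: "(\<Sum>x\<in>?I. ind Sn x) = real (card Sn)"
  proof -
    have "(\<Sum>x\<in>?I. ind Sn x) = real (card {x\<in>?I. x \<in> Sn})" unfolding ind_def by (rule sum_ind) simp
    also have "{x\<in>?I. x \<in> Sn} = Sn" using Sn by auto
    finally show ?thesis .
  qed
  have gs: "(\<Sum>x\<in>?I. g x) = 0"
  proof -
    have "(\<Sum>x\<in>?I. g x) = (\<Sum>x\<in>?I. ind Sn x - \<delta>)" by (intro sum.cong) (auto simp: g_def)
    also have "\<dots> = real (card Sn) - real n * \<delta>" by (simp add: sum_subtractf sumind)
    also have "\<dots> = 0" using n by (simp add: \<delta>_def)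
    finally show ?thesis .
  qed
  have AP: "(\<Sum>j<L. g (x0 + q * int j)) \<le> \<epsilon> * real L"
    if q: "1 \<le> q" and x0: "1 \<le> x0" and top: "x0 + q * (int L - 1) \<le> int n" for x0 q
  proof -
    have inI: "x0 + q * int j \<in> ?I" if "j < L" for j
    proof -
      have a: "q * int j \<le> q * (int L - 1)" using q that by (intro mult_left_mono) auto
      have b: "0 \<le> q * int j" using q by simp
      show ?thesis using a b x0 top by simp
    qed
    have "(\<Sum>j<L. g (x0 + q * int j)) = (\<Sum>j<L. (if x0 + q * int j \<in> Sn then 1 else 0) - \<delta>)"
    proof (intro sum.cong refl)
      fix j assume "j \<in> {..<L}"
      then have "x0 + q * int j \<in> ?I" by (intro inI) auto
      then show "g (x0 + q * int j) = (if x0 + q * int j \<in> Sn then 1 else 0) - \<delta>"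
        by (simp only: g_def ind_def if_True)
    qed
    also have "\<dots> = real (card {j\<in>{..<L}. x0 + q * int j \<in> Sn}) - real L * \<delta>"
      by (simp add: sum_subtractf sum_ind)
    also have "real (card {j\<in>{..<L}. x0 + q * int j \<in> Sn}) \<le> real (card SL)"
      using ap_count[OF aff PS finSn SL q] by simp
    also have "real (card SL) - real L * \<delta> \<le> \<epsilon> * real L"
    proof -
      have "c * real L \<le> \<delta> * real L" using c by (intro mult_right_mono) (auto simp: \<delta>_def)
      then show ?thesis using cSL by (simp add: algebra_simps)
    qed
    finally show ?thesis by simp
  qed
  have Fg: "\<forall>\<theta>. norm (Fh n g \<theta>) \<le> M"
  proof
    fix \<theta>
    show "norm (Fh n g \<theta>) \<le> M" unfolding M_def
    proof (rule equidist[OF gb _ gs L Q \<epsilon>])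
      fix x :: int assume "x \<notin> ?I" then show "g x = 0" unfolding g_def by (simp only: if_False)
    next
      fix x0 q :: int assume "1 \<le> q" "q \<le> int Q" "1 \<le> x0" "x0 + q * (int L - 1) \<le> int n"
      then show "(\<Sum>j<L. g (x0 + q * int j)) \<le> \<epsilon> * real L" by (intro AP) auto
    qed
  qed
  have dec: "T3 n f f f = T3 n u u u + T3 n g f f + T3 n u g f + T3 n u u g"
    by (rule T3_decomp) (simp add: f_def u_def g_def)
  have b1: "\<bar>T3 n g f f\<bar> \<le> M * real n" using Fg by (intro T3_bound[OF gb fb fb M0]) simp
  have b2: "\<bar>T3 n u g f\<bar> \<le> M * real n" using Fg by (intro T3_bound[OF ub gb fb M0]) simp
  have b3: "\<bar>T3 n u u g\<bar> \<le> M * real n" using Fg by (intro T3_bound[OF ub ub gb M0]) simp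
  have uuu: "T3 n u u u = \<delta>^3 * (real n ^ 2 + (if even n then 0 else 1)) / 2"
    unfolding u_def by (rule T3_const)
  have d3: "0 \<le> \<delta>^3" "\<delta>^3 \<le> 1" using \<delta>0 \<delta>1 by (auto simp: power_le_one)
  have "\<bar>T3 n u u u - \<delta>^3 / 2 * real n ^ 2\<bar> \<le> 1/2"
  proof -
    have e: "T3 n u u u - \<delta>^3 / 2 * real n ^ 2 = \<delta>^3 * (if even n then 0 else 1) / 2"
      unfolding uuu by (simp add: field_simps)
    show ?thesis unfolding e using d3 by (cases "even n") auto
  qed
  moreover have "real (num_3AP Sn) = T3 n f f f" unfolding f_def by (rule num_3AP_T3[OF Sn])
  ultimately show ?thesis using b1 b2 b3 dec unfolding M_def[symmetric] \<delta>_def[symmetric]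
    by linarith
qed


theorem mainTheorem3:
  fixes P :: "int set \<Rightarrow> bool" and S :: "nat \<Rightarrow> int set"
  assumes "affine_prop P"
    and S_sub: "\<And>n. n \<ge> 1 \<Longrightarrow> S n \<subseteq> {1..int n}"
    and S_P: "\<And>n. n \<ge> 1 \<Longrightarrow> P (S n)"
    and S_max: "\<And>n T. n \<ge> 1 \<Longrightarrow> T \<subseteq> {1..int n} \<Longrightarrow> P T \<Longrightarrow> card T \<le> card (S n)"
  shows "(\<lambda>n. real (num_3AP (S n)) - (real (card (S n)) / real n) ^ 3 / 2 * real n ^ 2)
           \<in> o(\<lambda>n. real n ^ 2)"
proof (rule landau_o.smallI)
  fix \<epsilon>0 :: real assume \<epsilon>0: "\<epsilon>0 > 0"
  define fr where "fr m = real (card (S m)) / real m" for m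
  define X where "X = fr ` {1..}"
  define c where "c = Inf X"
  have X0: "X \<noteq> {}" by (simp add: X_def)
  have bdd: "bdd_below X" unfolding X_def fr_def by (intro bdd_belowI[of _ 0]) auto
  have c_le: "c \<le> fr n" if "n \<ge> 1" for n
    unfolding c_def using bdd that by (intro cInf_lower) (auto simp: X_def)
  define \<epsilon> where "\<epsilon> = \<epsilon>0 / 16"
  have \<epsilon>: "\<epsilon> > 0" using \<epsilon>0 by (simp add: \<epsilon>_def)
  have "Inf X < c + \<epsilon>" using \<epsilon> by (simp add: c_def)
  then obtain L where L: "L \<ge> 1" and frL: "fr L < c + \<epsilon>"
    using cInf_less_iff[OF X0 bdd] by (auto simp: X_def)
  define Q where "Q = nat \<lceil>2 * pi * real L / \<epsilon>\<rceil> + 1"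
  have Q1: "Q \<ge> 1" by (simp add: Q_def)
  have "2 * pi * real L / \<epsilon> \<le> real Q" unfolding Q_def by linarith
  then have Qb: "2 * pi * real L / real Q \<le> \<epsilon>" using \<epsilon> Q1
    by (simp add: field_simps)
  have cSL: "real (card (S L)) \<le> (c + \<epsilon>) * real L"
    using frL L by (simp add: fr_def field_simps)
  define n0 where "n0 = nat \<lceil>4 * real Q * real L / \<epsilon>\<rceil> + nat \<lceil>1 / \<epsilon>\<rceil> + 1"
  show "eventually (\<lambda>n. norm (real (num_3AP (S n)) - (real (card (S n)) / real n) ^ 3 / 2 * real n ^ 2)
          \<le> \<epsilon>0 * norm (real n ^ 2)) sequentially"
  proof (rule eventually_sequentiallyI[of n0])
    fix n assume n: "n0 \<le> n"
    have n1: "n \<ge> 1" using n by (simp add: n0_def)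
    have nQ: "4 * real Q * real L \<le> \<epsilon> * real n"
    proof -
      have "4 * real Q * real L / \<epsilon> \<le> real n" using n unfolding n0_def by linarith
      then show ?thesis using \<epsilon> by (simp add: field_simps)
    qed
    have ne: "1 \<le> \<epsilon> * real n"
    proof -
      have "1 / \<epsilon> \<le> real n" using n unfolding n0_def by linarith
      then show ?thesis using \<epsilon> by (simp add: field_simps)
    qed
    have cn: "c \<le> real (card (S n)) / real n" using c_le[OF n1] by (simp add: fr_def)
    have core': "\<bar>real (num_3AP (S n)) - (real (card (S n)) / real n) ^ 3 / 2 * real n ^ 2\<bar>
      \<le> 3 * (2 * \<epsilon> * real n + 4 * real Q * real L + 2 * pi * real n * real L / real Q) * real n + 1/2"
      by (rule core[OF assms(1) S_sub[OF n1] S_P[OF n1] n1 S_max[OF L] cSL cn L Q1 less_imp_le[OF \<epsilon>]])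
    have "2 * pi * real n * real L / real Q = real n * (2 * pi * real L / real Q)" by simp
    also have "\<dots> \<le> real n * \<epsilon>" using Qb by (intro mult_left_mono) auto
    finally have t3: "2 * pi * real n * real L / real Q \<le> \<epsilon> * real n" by (simp add: mult.commute)
    have "3 * (2 * \<epsilon> * real n + 4 * real Q * real L + 2 * pi * real n * real L / real Q) * real n
        \<le> 3 * (4 * \<epsilon> * real n) * real n"
      using nQ t3 by (intro mult_right_mono) auto
    moreover have "1/2 \<le> \<epsilon> * real n * real n"
    proof -
      have "1 * 1 \<le> (\<epsilon> * real n) * real n" using ne n1 by (intro mult_mono) auto
      then show ?thesis by simp
    qed
    ultimately have "\<bar>real (num_3AP (S n)) - (real (card (S n)) / real n) ^ 3 / 2 * real n ^ 2\<bar>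
        \<le> 13 * \<epsilon> * (real n * real n)" using core' by (simp add: algebra_simps)
    also have "\<dots> \<le> \<epsilon>0 * (real n * real n)" using \<epsilon>0 by (simp add: \<epsilon>_def)
    finally show "norm (real (num_3AP (S n)) - (real (card (S n)) / real n) ^ 3 / 2 * real n ^ 2)
          \<le> \<epsilon>0 * norm (real n ^ 2)" by (simp add: power2_eq_square)
  qed
qed

end
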